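(* Let $\phi\colon\mathbb{R}\to\mathbb{R}$ be an increasing homeomorphism with $\phi(0)=0$, let $f\colon\mathbb{R}\to\mathbb{R}$ be continuous and let $h\colon[0,T]\times\mathbb{R}\to\mathbb{R}$ be a Carathéodory function such that there exists $\gamma\in L^1([0,T],\mathbb{R}^+)$ with $h(t,u)\le\gamma(t)$ for a.e. $t\in[0,T]$ and all $u\in\mathbb{R}$. For $\lambda\in\,]0,1]$ consider $$(\phi(u'))'+\lambda f(u)u'+\lambda h(t,u)=0. \qquad (\ast_\lambda)$$ Then there exists a constant $K_0=K_0(\gamma)$ such that every $T$-periodic solution $u$ of $(\ast_\lambda)$ with $\lambda\in\,]0,1]$ satisfies $\max u-\min u\le K_0$ and $\|u'\|_{L^1}\le K_0$. Moreover, for any $\ell_1<\ell_2$ there exists $K_1>0$ such that every $T$-periodic solution $u$ of $(\ast_\lambda)$ with $\lambda\in\,]0,1]$ and $\ell_1\le u(t)\le\ell_2$ for all $t\in[0,T]$ satisfies $\|u'\|_\infty\le K_1$.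
   Context: A $T$-periodic solution is a $u\in\mathcal{C}^1([0,T])$ with $u(0)=u(T)$, $u'(0)=u'(T)$, $\phi(u')$ absolutely continuous, satisfying the equation a.e. A Carathéodory function is measurable in $t$, continuous in $u$, and for each $r>0$ bounded in absolute value on $[0,T]\times[-r,r]$ by an $L^1$ function of $t$. $\mathbb{R}^+$ denotes the nonnegative reals. *)

theory Defs
  imports "HOL-Analysis.Analysis"
begin

definition abs_cont_on :: "real \<Rightarrow> real \<Rightarrow> (real \<Rightarrow> real) \<Rightarrow> bool" where
  "abs_cont_on a b g \<longleftrightarrow>
     (\<forall>\<epsilon>>0. \<exists>\<delta>>0. \<forall>(n::nat) (x::nat \<Rightarrow> real) (y::nat \<Rightarrow> real).
        (\<forall>i<n. a \<le> x i \<and> x i \<le> y i \<and> y i \<le> b) \<and>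
        (\<forall>i<n. \<forall>j<n. i \<noteq> j \<longrightarrow> y i \<le> x j \<or> y j \<le> x i) \<and>
        (\<Sum>i<n. y i - x i) < \<delta>
        \<longrightarrow> (\<Sum>i<n. \<bar>g (y i) - g (x i)\<bar>) < \<epsilon>)"

definition caratheodory :: "real \<Rightarrow> (real \<Rightarrow> real \<Rightarrow> real) \<Rightarrow> bool" where
  "caratheodory T h \<longleftrightarrow>
     (\<forall>u. (\<lambda>t. h t u) \<in> borel_measurable (lebesgue_on {0..T})) \<and>
     (\<forall>t\<in>{0..T}. continuous_on UNIV (h t)) \<and>
     (\<forall>r>0. \<exists>m. m integrable_on {0..T} \<and>
        (\<forall>t\<in>{0..T}. \<forall>u. \<bar>u\<bar> \<le> r \<longrightarrow> \<bar>h t u\<bar> \<le> m t))"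

definition periodic_solution ::
  "(real \<Rightarrow> real) \<Rightarrow> (real \<Rightarrow> real) \<Rightarrow> (real \<Rightarrow> real \<Rightarrow> real) \<Rightarrow> real \<Rightarrow> real
   \<Rightarrow> (real \<Rightarrow> real) \<Rightarrow> (real \<Rightarrow> real) \<Rightarrow> bool" where
  "periodic_solution \<phi> f h T lam u u' \<longleftrightarrow>
     (\<forall>t\<in>{0..T}. (u has_real_derivative u' t) (at t within {0..T})) \<and>
     continuous_on {0..T} u' \<and>
     u 0 = u T \<and> u' 0 = u' T \<and>
     abs_cont_on 0 T (\<lambda>t. \<phi> (u' t)) \<and>
     (AE t in lebesgue. t \<in> {0..T} \<longrightarrow>
        (\<exists>D. ((\<lambda>s. \<phi> (u' s)) has_real_derivative D) (at t) \<and>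
             D + lam * f (u t) * u' t + lam * h t (u t) = 0))"

end

theory Submission
  imports Defs
begin

lemma ivl_disj:
  fixes c d c' d' :: real
  assumes "c < d" "c' < d'" "{c<..<d} \<inter> {c'<..<d'} = {}"
  shows "d \<le> c' \<or> d' \<le> c"
proof (rule ccontr)
  assume "\<not> (d \<le> c' \<or> d' \<le> c)"
  then have "(max c c' + min d d') / 2 \<in> {c<..<d} \<inter> {c'<..<d'}"
    using assms(1,2) by (auto simp: max_def min_def)
  then show False using assms(3) by blast
qed

lemma ivl_negl:
  fixes c d c' d' :: real
  assumes "d \<le> c' \<or> d' \<le> c"
  shows "negligible ({c..d} \<inter> {c'..d'})"
proof -
  have "{c..d} \<inter> {c'..d'} \<subseteq> {d, d'}" using assms by auto
  then show ?thesis by (rule negligible_subset[rotated]) auto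
qed
lemma straddle:
  fixes g :: "real \<Rightarrow> real"
  assumes "(g has_real_derivative D) (at t)" "e > 0"
  obtains r where "r > 0" "\<And>x y. x \<le> t \<Longrightarrow> t \<le> y \<Longrightarrow> y - x < r \<Longrightarrow> (D - e) * (y - x) \<le> g y - g x"
proof -
  have "((\<lambda>y. (g y - g t) / (y - t)) \<longlongrightarrow> D) (at t)"
    using assms(1) by (simp add: has_field_derivative_iff)
  then have "\<forall>\<^sub>F y in at t. dist ((g y - g t) / (y - t)) D < e"
    using assms(2) tendstoD by blast
  then obtain r where r: "r > 0" and rr: "\<And>y. y \<noteq> t \<Longrightarrow> dist y t < r \<Longrightarrow> dist ((g y - g t) / (y - t)) D < e"
    unfolding eventually_at by blast
  have A: "(D - e) * (y - t) \<le> g y - g t" if "t \<le> y" "y - t < r" for y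
  proof (cases "y = t")
    case False
    with that have "y > t" by simp
    have "dist ((g y - g t) / (y - t)) D < e" using rr[of y] False that by (simp add: dist_real_def)
    then have "D - e \<le> (g y - g t) / (y - t)" by (simp add: dist_real_def abs_less_iff)
    then show ?thesis using \<open>y > t\<close> by (simp add: pos_le_divide_eq)
  qed simp
  have B: "(D - e) * (t - x) \<le> g t - g x" if "x \<le> t" "t - x < r" for x
  proof (cases "x = t")
    case False
    with that have "x < t" by simp
    have "dist ((g x - g t) / (x - t)) D < e" using rr[of x] False that by (simp add: dist_real_def)
    then have "D - e \<le> (g x - g t) / (x - t)" by (simp add: dist_real_def abs_less_iff)
    also have "(g x - g t) / (x - t) = (g t - g x) / (t - x)"
      by (metis minus_diff_eq minus_divide_divide)
    finally show ?thesis using \<open>x < t\<close> by (simp add: pos_le_divide_eq)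
  qed simp
  show ?thesis
  proof (rule that[OF r])
    fix x y assume "x \<le> t" "t \<le> y" "y - x < r"
    then have "(D - e) * (y - t) \<le> g y - g t" "(D - e) * (t - x) \<le> g t - g x"
      using A B by auto
    then show "(D - e) * (y - x) \<le> g y - g x" by (simp add: algebra_simps)
  qed
qed

lemma ac_finite:
  fixes g :: "real \<Rightarrow> real"
  assumes ac: "abs_cont_on a b g" and e: "e > 0"
  shows "\<exists>\<delta>>0. \<forall>(I::'i set) c d. finite I \<and> (\<forall>i\<in>I. a \<le> c i \<and> c i \<le> d i \<and> d i \<le> b) \<and>
       (\<forall>i\<in>I. \<forall>j\<in>I. i \<noteq> j \<longrightarrow> d i \<le> c j \<or> d j \<le> c i) \<and> (\<Sum>i\<in>I. d i - c i) < \<delta> \<longrightarrow>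
       (\<Sum>i\<in>I. \<bar>g (d i) - g (c i)\<bar>) < e"
proof -
  obtain \<delta> where "\<delta> > 0" and H: "\<forall>(n::nat) (x::nat \<Rightarrow> real) (y::nat \<Rightarrow> real).
        (\<forall>i<n. a \<le> x i \<and> x i \<le> y i \<and> y i \<le> b) \<and>
        (\<forall>i<n. \<forall>j<n. i \<noteq> j \<longrightarrow> y i \<le> x j \<or> y j \<le> x i) \<and>
        (\<Sum>i<n. y i - x i) < \<delta>
        \<longrightarrow> (\<Sum>i<n. \<bar>g (y i) - g (x i)\<bar>) < e"
    using ac e unfolding abs_cont_on_def by blast
  have "\<forall>(I::'i set) c d. finite I \<and> (\<forall>i\<in>I. a \<le> c i \<and> c i \<le> d i \<and> d i \<le> b) \<and>
       (\<forall>i\<in>I. \<forall>j\<in>I. i \<noteq> j \<longrightarrow> d i \<le> c j \<or> d j \<le> c i) \<and> (\<Sum>i\<in>I. d i - c i) < \<delta> \<longrightarrow>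
       (\<Sum>i\<in>I. \<bar>g (d i) - g (c i)\<bar>) < e"
  proof (intro allI impI, elim conjE)
    fix I :: "'i set" and c d
    assume fin: "finite I" and h1: "\<forall>i\<in>I. a \<le> c i \<and> c i \<le> d i \<and> d i \<le> b"
      and h2: "\<forall>i\<in>I. \<forall>j\<in>I. i \<noteq> j \<longrightarrow> d i \<le> c j \<or> d j \<le> c i"
      and h3: "(\<Sum>i\<in>I. d i - c i) < \<delta>"
    obtain f where f: "bij_betw f {0..<card I} I" using ex_bij_betw_nat_finite[OF fin] by blast
    have eq1: "(\<Sum>i<card I. d (f i) - c (f i)) = (\<Sum>i\<in>I. d i - c i)"
      using sum.reindex_bij_betw[OF f, of "\<lambda>i. d i - c i"] by (simp add: lessThan_atLeast0)
    have eq2: "(\<Sum>i<card I. \<bar>g (d (f i)) - g (c (f i))\<bar>) = (\<Sum>i\<in>I. \<bar>g (d i) - g (c i)\<bar>)"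
      using sum.reindex_bij_betw[OF f, of "\<lambda>i. \<bar>g (d i) - g (c i)\<bar>"] by (simp add: lessThan_atLeast0)
    have fI: "i < card I \<Longrightarrow> f i \<in> I" for i using f by (auto simp: bij_betw_def)
    have finj: "i < card I \<Longrightarrow> j < card I \<Longrightarrow> i \<noteq> j \<Longrightarrow> f i \<noteq> f j" for i j
      using f by (auto simp: bij_betw_def inj_on_def)
    have "(\<Sum>i<card I. \<bar>g (d (f i)) - g (c (f i))\<bar>) < e"
      using H[rule_format, of "card I" "\<lambda>i. c (f i)" "\<lambda>i. d (f i)"] h1 h2 h3 eq1 fI finj
      by (metis (no_types, lifting))
    then show "(\<Sum>i\<in>I. \<bar>g (d i) - g (c i)\<bar>) < e" using eq2 by simp
  qed
  then show ?thesis using \<open>\<delta> > 0\<close> by blast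
qed

lemma KEY:
  fixes g \<gamma> :: "real \<Rightarrow> real"
  assumes ab: "a \<le> b" and ac: "abs_cont_on a b g"
    and gi: "\<gamma> integrable_on {a..b}" and g0: "\<And>t. t \<in> {a..b} \<Longrightarrow> 0 \<le> \<gamma> t"
    and der: "AE t in lebesgue. t \<in> {a..b} \<longrightarrow> (\<exists>D. (g has_real_derivative D) (at t) \<and> - \<gamma> t \<le> D)"
  shows "g a - g b \<le> integral {a..b} \<gamma>"
proof -
  define I where "I = integral {a..b} \<gamma>"
  have main: "g a - g b \<le> I + e * (b - a + 2)" if e: "e > 0" for e
  proof -
    obtain \<delta> where \<delta>: "\<delta> > 0" and acd: "\<forall>(J::(real \<times> real set) set) c d. finite J \<and> (\<forall>i\<in>J. a \<le> c i \<and> c i \<le> d i \<and> d i \<le> b) \<and>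
       (\<forall>i\<in>J. \<forall>j\<in>J. i \<noteq> j \<longrightarrow> d i \<le> c j \<or> d j \<le> c i) \<and> (\<Sum>i\<in>J. d i - c i) < \<delta> \<longrightarrow>
       (\<Sum>i\<in>J. \<bar>g (d i) - g (c i)\<bar>) < e"
      using ac_finite[OF ac e, where 'i = "real \<times> real set"] by (elim exE conjE) 
    obtain N where Nsub: "{t \<in> space lebesgue. \<not> (t \<in> {a..b} \<longrightarrow> (\<exists>D. (g has_real_derivative D) (at t) \<and> - \<gamma> t \<le> D))} \<subseteq> N"
      and N0: "emeasure lebesgue N = 0" and Nsets: "N \<in> sets lebesgue" using der by (rule AE_E)
    have N: "N \<in> null_sets lebesgue" using N0 Nsets by (simp add: null_sets_def)
    obtain Uo where Uo: "open Uo" "N \<subseteq> Uo" "Uo - N \<in> lmeasurable" "emeasure lebesgue (Uo - N) < ennreal \<delta>"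
      using sets_lebesgue_outer_open[OF Nsets \<delta>] by blast
    have Nf: "N \<in> lmeasurable" using N by (simp add: fmeasurableI_null_sets)
    have Ofm: "Uo \<in> lmeasurable"
    proof -
      have "Uo = (Uo - N) \<union> N" using Uo by blast
      then show ?thesis using Uo(3) Nf by (metis fmeasurable.Un)
    qed
    have "ennreal (measure lebesgue (Uo - N)) < ennreal \<delta>"
      using Uo(3,4) by (simp add: emeasure_eq_measure2)
    then have "measure lebesgue (Uo - N) < \<delta>"
      using \<delta> by (simp add: ennreal_less_iff)
    then have mO: "measure lebesgue Uo < \<delta>"
      using measure_Diff_null_set[OF fmeasurableD[OF Ofm] N] by simp
    have gI: "(\<gamma> has_integral I) (cbox a b)" using gi unfolding I_def by (simp add: has_integral_integral)
    obtain d1 where d1g: "gauge d1" and d1: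
      "\<forall>\<D>. \<D> tagged_division_of (cbox a b) \<and> d1 fine \<D> \<longrightarrow>
        norm ((\<Sum>(x, k)\<in>\<D>. measure lborel k *\<^sub>R \<gamma> x) - I) < e"
      using has_integral[THEN iffD1, OF gI, rule_format, OF e] by (elim exE conjE)
    have "\<forall>t. \<exists>r>0. t \<in> {a..b} - N \<longrightarrow> (\<forall>x y. x \<le> t \<longrightarrow> t \<le> y \<longrightarrow> y - x < r \<longrightarrow> (- \<gamma> t - e) * (y - x) \<le> g y - g x)"
    proof
      fix t
      show "\<exists>r>0. t \<in> {a..b} - N \<longrightarrow> (\<forall>x y. x \<le> t \<longrightarrow> t \<le> y \<longrightarrow> y - x < r \<longrightarrow> (- \<gamma> t - e) * (y - x) \<le> g y - g x)"
      proof (cases "t \<in> {a..b} - N")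
        case True
        have "\<not> (t \<in> space lebesgue \<and> \<not> (t \<in> {a..b} \<longrightarrow> (\<exists>D. (g has_real_derivative D) (at t) \<and> - \<gamma> t \<le> D)))"
          using Nsub True by blast
        then obtain D where D: "(g has_real_derivative D) (at t)" "- \<gamma> t \<le> D" using True by auto
        obtain r where r: "r > 0" "\<And>x y. x \<le> t \<Longrightarrow> t \<le> y \<Longrightarrow> y - x < r \<Longrightarrow> (D - e) * (y - x) \<le> g y - g x"
          using straddle[OF D(1) e] by blast
        have "(- \<gamma> t - e) * (y - x) \<le> g y - g x" if "x \<le> t" "t \<le> y" "y - x < r" for x y
        proof -
          have "(- \<gamma> t - e) * (y - x) \<le> (D - e) * (y - x)"
            using D(2) that by (intro mult_right_mono) auto
          then show ?thesis using r(2)[OF that] by linarith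
        qed
        then show ?thesis using r(1) by blast
      next
        case False
        then show ?thesis by (intro exI[of _ 1]) auto
      qed
    qed
    then have "\<exists>r. \<forall>t. r t > 0 \<and> (t \<in> {a..b} - N \<longrightarrow> (\<forall>x y. x \<le> t \<longrightarrow> t \<le> y \<longrightarrow> y - x < r t \<longrightarrow> (- \<gamma> t - e) * (y - x) \<le> g y - g x))"
      by (rule choice)
    then obtain r where r: "\<forall>t. r t > 0 \<and> (t \<in> {a..b} - N \<longrightarrow> (\<forall>x y. x \<le> t \<longrightarrow> t \<le> y \<longrightarrow> y - x < r t \<longrightarrow> (- \<gamma> t - e) * (y - x) \<le> g y - g x))"
      by (rule exE)
    have rpos: "\<And>t. r t > 0" using r by blast
    have rr: "\<And>t x y. t \<in> {a..b} - N \<Longrightarrow> x \<le> t \<Longrightarrow> t \<le> y \<Longrightarrow> y - x < r t \<Longrightarrow> (- \<gamma> t - e) * (y - x) \<le> g y - g x"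
      using r by blast
    define d2 where "d2 t = (if t \<in> N then Uo else ball t (r t / 2))" for t
    have d2g: "gauge d2" unfolding gauge_def d2_def using Uo rpos by auto
    obtain \<D> where Dt: "\<D> tagged_division_of {a..b}" and Df: "(\<lambda>t. d1 t \<inter> d2 t) fine \<D>"
      using fine_division_exists_real[OF gauge_Int[OF d1g d2g]] by metis
    have fin: "finite \<D>" using Dt by (rule tagged_division_ofD)
    have Df1: "d1 fine \<D>" and Df2: "d2 fine \<D>" using Df by (auto simp: fine_Int)
    have elem: "\<exists>c d. K = {c..d} \<and> c \<le> x \<and> x \<le> d \<and> a \<le> c \<and> d \<le> b" if xK: "(x, K) \<in> \<D>" for x K
    proof -
      obtain c d where K: "K = cbox c d" using tagged_division_ofD(4)[OF Dt xK] by blast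
      have "x \<in> K" "K \<subseteq> {a..b}" using tagged_division_ofD(2,3)[OF Dt xK] by auto
      then show ?thesis using K by auto
    qed
    have elem2: "K = {Inf K..Sup K} \<and> Inf K \<le> x \<and> x \<le> Sup K \<and> a \<le> Inf K \<and> Sup K \<le> b" if xK: "(x, K) \<in> \<D>" for x K
    proof -
      obtain c d where "K = {c..d}" "c \<le> x" "x \<le> d" "a \<le> c" "d \<le> b" using elem[OF xK] by blast
      then show ?thesis by auto
    qed
    have mK: "measure lborel K = Sup K - Inf K" if "(x, K) \<in> \<D>" for x K
      using elem2[OF that] by (metis content_real order_trans)
    define DN where "DN = \<D> \<inter> {p. fst p \<in> N}"
    define DG where "DG = \<D> - {p. fst p \<in> N}"
    have tele: "(\<Sum>(x,K)\<in>\<D>. g (Sup K) - g (Inf K)) = g b - g a"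
      using additive_tagged_division_1[OF ab Dt] .
    have spl: "(\<Sum>(x,K)\<in>\<D>. g (Sup K) - g (Inf K)) = (\<Sum>(x,K)\<in>DN. g (Sup K) - g (Inf K)) + (\<Sum>(x,K)\<in>DG. g (Sup K) - g (Inf K))"
      unfolding DN_def DG_def by (rule sum.Int_Diff[OF fin])
    have goodterm: "- (measure lborel K * \<gamma> x) - e * measure lborel K \<le> g (Sup K) - g (Inf K)" if xK: "(x, K) \<in> DG" for x K
    proof -
      have xK': "(x, K) \<in> \<D>" "x \<notin> N" using xK unfolding DG_def by auto
      note E = elem2[OF xK'(1)]
      have "K \<subseteq> d2 x" using Df2 xK'(1) unfolding fine_def by blast
      then have "K \<subseteq> ball x (r x / 2)" using xK'(2) unfolding d2_def by simp
      moreover have "Inf K \<in> K" "Sup K \<in> K" using E by (metis atLeastAtMost_iff order.refl order_trans)+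
      ultimately have "dist x (Inf K) < r x / 2" "dist x (Sup K) < r x / 2" by auto
      then have "Sup K - Inf K < r x" unfolding dist_real_def by arith
      then have "(- \<gamma> x - e) * (Sup K - Inf K) \<le> g (Sup K) - g (Inf K)"
        using rr[of x "Inf K" "Sup K"] E xK'(2) by auto
      then show ?thesis unfolding mK[OF xK'(1)] by (simp add: algebra_simps)
    qed
    have "(\<Sum>(x,K)\<in>DG. - (measure lborel K * \<gamma> x) - e * measure lborel K) \<le> (\<Sum>(x,K)\<in>DG. g (Sup K) - g (Inf K))"
      by (rule sum_mono) (use goodterm in auto)
    then have G1: "- (\<Sum>(x,K)\<in>DG. measure lborel K * \<gamma> x) - e * (\<Sum>(x,K)\<in>DG. measure lborel K) \<le> (\<Sum>(x,K)\<in>DG. g (Sup K) - g (Inf K))"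
      by (simp add: sum_subtractf sum_negf sum_distrib_left case_prod_unfold)
    have finDG: "finite DG" "DG \<subseteq> \<D>" using fin unfolding DG_def by auto
    have G2: "(\<Sum>(x,K)\<in>DG. measure lborel K * \<gamma> x) \<le> (\<Sum>(x,K)\<in>\<D>. measure lborel K * \<gamma> x)"
    proof (rule sum_mono2[OF fin finDG(2)])
      fix p assume "p \<in> \<D> - DG"
      then obtain x K where p: "p = (x, K)" "(x, K) \<in> \<D>" by (cases p) auto
      then have "x \<in> {a..b}" using tagged_division_ofD(2,3)[OF Dt p(2)] by auto
      then show "0 \<le> (case p of (x, K) \<Rightarrow> measure lborel K * \<gamma> x)" using p g0 by simp
    qed
    have G3: "(\<Sum>(x,K)\<in>\<D>. measure lborel K * \<gamma> x) \<le> I + e"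
    proof -
      have "norm ((\<Sum>(x, k)\<in>\<D>. measure lborel k *\<^sub>R \<gamma> x) - I) < e"
        using d1 Dt Df1 by (simp add: cbox_interval)
      then show ?thesis by (simp add: case_prod_unfold)
    qed
    have G4: "(\<Sum>(x,K)\<in>DG. measure lborel K) \<le> b - a"
    proof -
      have "(\<Sum>(x,K)\<in>DG. measure lborel K) \<le> (\<Sum>(x,K)\<in>\<D>. measure lborel K)"
        by (rule sum_mono2[OF fin finDG(2)]) auto
      also have "\<dots> = b - a"
        using additive_content_tagged_division[of \<D> a b] Dt ab by (simp add: cbox_interval)
      finally show ?thesis .
    qed
    have Bad: "- e \<le> (\<Sum>(x,K)\<in>DN. g (Sup K) - g (Inf K))"
    proof -
      define DN' where "DN' = DN \<inter> {p. Inf (snd p) < Sup (snd p)}"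
      have finDN: "finite DN" "DN \<subseteq> \<D>" using fin unfolding DN_def by auto
      have finDN': "finite DN'" using finDN unfolding DN'_def by auto
      have s1: "(\<Sum>(x,K)\<in>DN. g (Sup K) - g (Inf K)) = (\<Sum>(x,K)\<in>DN'. g (Sup K) - g (Inf K))"
      proof -
        have "(\<Sum>(x,K)\<in>DN. g (Sup K) - g (Inf K)) = (\<Sum>(x,K)\<in>DN'. g (Sup K) - g (Inf K)) + (\<Sum>(x,K)\<in>DN - {p. Inf (snd p) < Sup (snd p)}. g (Sup K) - g (Inf K))"
          unfolding DN'_def by (rule sum.Int_Diff[OF finDN(1)])
        moreover have "(\<Sum>(x,K)\<in>DN - {p. Inf (snd p) < Sup (snd p)}. g (Sup K) - g (Inf K)) = 0"
        proof (rule sum.neutral, rule ballI)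
          fix p assume p: "p \<in> DN - {p. Inf (snd p) < Sup (snd p)}"
          obtain x K where pxK: "p = (x, K)" by (cases p)
          have "(x,K) \<in> \<D>" "\<not> Inf K < Sup K" using p pxK unfolding DN_def by auto
          then have "Inf K = Sup K" using elem2 by force
          then show "(case p of (x, K) \<Rightarrow> g (Sup K) - g (Inf K)) = 0" using pxK by simp
        qed
        ultimately show ?thesis by simp
      qed
      have mem: "p \<in> \<D> \<and> fst p \<in> N \<and> Inf (snd p) < Sup (snd p)" if "p \<in> DN'" for p
        using that unfolding DN'_def DN_def by auto
      have E2: "snd p = {Inf (snd p)..Sup (snd p)} \<and> a \<le> Inf (snd p) \<and> Sup (snd p) \<le> b" if "p \<in> \<D>" for p
        using elem2[of "fst p" "snd p"] that by auto
      have c1: "\<forall>i\<in>DN'. a \<le> Inf (snd i) \<and> Inf (snd i) \<le> Sup (snd i) \<and> Sup (snd i) \<le> b"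
        using mem E2 by fastforce
      have c2: "\<forall>i\<in>DN'. \<forall>j\<in>DN'. i \<noteq> j \<longrightarrow> Sup (snd i) \<le> Inf (snd j) \<or> Sup (snd j) \<le> Inf (snd i)"
      proof (intro ballI impI)
        fix i j assume i: "i \<in> DN'" and j: "j \<in> DN'" and ij: "i \<noteq> j"
        have "interior (snd i) \<inter> interior (snd j) = {}"
          using tagged_division_ofD(5)[OF Dt, of "fst i" "snd i" "fst j" "snd j"] mem[OF i] mem[OF j] ij by auto
        then have "{Inf (snd i)<..<Sup (snd i)} \<inter> {Inf (snd j)<..<Sup (snd j)} = {}"
          using E2[of i] E2[of j] mem[OF i] mem[OF j] by (metis interior_atLeastAtMost_real)
        then show "Sup (snd i) \<le> Inf (snd j) \<or> Sup (snd j) \<le> Inf (snd i)"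
          using ivl_disj mem[OF i] mem[OF j] by blast
      qed
      have c3: "(\<Sum>i\<in>DN'. Sup (snd i) - Inf (snd i)) < \<delta>"
      proof -
        have "(\<Sum>i\<in>DN'. Sup (snd i) - Inf (snd i)) = (\<Sum>i\<in>DN'. measure lebesgue (snd i))"
        proof (rule sum.cong[OF refl])
          fix i assume i: "i \<in> DN'"
          then have e1: "snd i = {Inf (snd i)..Sup (snd i)}" and le: "Inf (snd i) \<le> Sup (snd i)" using mem[OF i] E2[of i] by auto
          from le have "measure lebesgue {Inf (snd i)..Sup (snd i)} = Sup (snd i) - Inf (snd i)" by simp
          then show "Sup (snd i) - Inf (snd i) = measure lebesgue (snd i)" using e1 by metis
        qed
        also have "\<dots> = measure lebesgue (\<Union>(snd ` DN'))"
        proof (rule measure_negligible_finite_Union_image[symmetric, OF finDN'])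
          fix i assume i: "i \<in> DN'"
          then have "snd i = {Inf (snd i)..Sup (snd i)}" using mem E2 by auto
          moreover have "{Inf (snd i)..Sup (snd i)} \<in> lmeasurable" by simp
          ultimately show "snd i \<in> lmeasurable" by metis
        next
          show "pairwise (\<lambda>x y. negligible (snd x \<inter> snd y)) DN'"
            unfolding pairwise_def
          proof (intro ballI impI)
            fix i j assume i: "i \<in> DN'" and j: "j \<in> DN'" and ij: "i \<noteq> j"
            have "negligible ({Inf (snd i)..Sup (snd i)} \<inter> {Inf (snd j)..Sup (snd j)})"
              using c2 i j ij by (intro ivl_negl) blast
            then show "negligible (snd i \<inter> snd j)" using E2[of i] E2[of j] mem[OF i] mem[OF j] by metis
          qed
        qed
        also have "\<dots> \<le> measure lebesgue Uo"
        proof (rule measure_mono_fmeasurable[OF _ _ Ofm])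
          show "\<Union>(snd ` DN') \<subseteq> Uo"
          proof
            fix z assume "z \<in> \<Union>(snd ` DN')"
            then obtain i where i: "i \<in> DN'" "z \<in> snd i" by blast
            have "(fst i, snd i) \<in> \<D>" using mem[OF i(1)] by simp
            then have "snd i \<subseteq> d2 (fst i)" by (rule fineD[OF Df2])
            then show "z \<in> Uo" using i mem[OF i(1)] unfolding d2_def by auto
          qed
          show "\<Union>(snd ` DN') \<in> sets lebesgue"
          proof (rule sets.finite_UN[OF finDN'])
            fix i assume i: "i \<in> DN'"
            then have "snd i = {Inf (snd i)..Sup (snd i)}" using mem E2 by auto
            moreover have "{Inf (snd i)..Sup (snd i)} \<in> sets lebesgue" by simp
            ultimately show "snd i \<in> sets lebesgue" by metis
          qed
        qed
        finally show ?thesis using mO by linarith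
      qed
      have "(\<Sum>i\<in>DN'. \<bar>g (Sup (snd i)) - g (Inf (snd i))\<bar>) < e"
        using acd[rule_format, OF conjI[OF finDN' conjI[OF c1 conjI[OF c2 c3]]]] .
      moreover have "(\<Sum>i\<in>DN'. - \<bar>g (Sup (snd i)) - g (Inf (snd i))\<bar>) \<le> (\<Sum>i\<in>DN'. g (Sup (snd i)) - g (Inf (snd i)))"
        by (rule sum_mono) simp
      ultimately show ?thesis using s1 by (simp add: case_prod_unfold sum_negf)
    qed
    have "g b - g a \<ge> - (I + e) - e * (b - a) - e"
    proof -
      have "e * (\<Sum>(x,K)\<in>DG. measure lborel K) \<le> e * (b - a)" using G4 e by simp
      then show ?thesis using G1 G2 G3 Bad tele spl by linarith
    qed
    then show ?thesis by (simp add: algebra_simps)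
  qed
  show ?thesis
  proof (rule field_le_epsilon)
    fix e :: real assume e: "e > 0"
    have "g a - g b \<le> I + (e / (b - a + 2)) * (b - a + 2)"
      using main[of "e / (b - a + 2)"] e ab by simp
    then show "g a - g b \<le> integral {a..b} \<gamma> + e" using ab by (simp add: I_def)
  qed
qed

lemma ac_lipschitz:
  fixes g :: "real \<Rightarrow> real"
  assumes L: "\<And>x y. x \<in> {a..b} \<Longrightarrow> y \<in> {a..b} \<Longrightarrow> \<bar>g y - g x\<bar> \<le> L * \<bar>y - x\<bar>"
  shows "abs_cont_on a b g"
  unfolding abs_cont_on_def
proof (intro allI impI)
  fix e :: real assume e: "e > 0"
  define L' where "L' = \<bar>L\<bar> + 1"
  have L'p: "L' > 0" unfolding L'_def by simp
  show "\<exists>\<delta>>0. \<forall>(n::nat) (x::nat \<Rightarrow> real) (y::nat \<Rightarrow> real).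
        (\<forall>i<n. a \<le> x i \<and> x i \<le> y i \<and> y i \<le> b) \<and>
        (\<forall>i<n. \<forall>j<n. i \<noteq> j \<longrightarrow> y i \<le> x j \<or> y j \<le> x i) \<and>
        (\<Sum>i<n. y i - x i) < \<delta>
        \<longrightarrow> (\<Sum>i<n. \<bar>g (y i) - g (x i)\<bar>) < e"
  proof (intro exI[of _ "e / L'"] conjI allI impI)
    show "e / L' > 0" using e L'p by simp
    fix n :: nat and x y :: "nat \<Rightarrow> real"
    assume H: "(\<forall>i<n. a \<le> x i \<and> x i \<le> y i \<and> y i \<le> b) \<and>
        (\<forall>i<n. \<forall>j<n. i \<noteq> j \<longrightarrow> y i \<le> x j \<or> y j \<le> x i) \<and> (\<Sum>i<n. y i - x i) < e / L'"
    have "(\<Sum>i<n. \<bar>g (y i) - g (x i)\<bar>) \<le> (\<Sum>i<n. L' * (y i - x i))"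
    proof (rule sum_mono)
      fix i assume "i \<in> {..<n}"
      then have i: "a \<le> x i" "x i \<le> y i" "y i \<le> b" using H by auto
      have "\<bar>g (y i) - g (x i)\<bar> \<le> L * \<bar>y i - x i\<bar>" using L[of "x i" "y i"] i by auto
      also have "\<dots> \<le> L' * (y i - x i)" unfolding L'_def using i
        by (simp add: abs_of_nonneg mult_right_mono)
      finally show "\<bar>g (y i) - g (x i)\<bar> \<le> L' * (y i - x i)" .
    qed
    also have "\<dots> = L' * (\<Sum>i<n. y i - x i)" by (simp add: sum_distrib_left)
    also have "\<dots> < L' * (e / L')" using H L'p by (intro mult_strict_left_mono) auto
    also have "\<dots> = e" using L'p by simp
    finally show "(\<Sum>i<n. \<bar>g (y i) - g (x i)\<bar>) < e" .
  qed
qed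

lemma cont_bounded:
  fixes f :: "real \<Rightarrow> real"
  assumes "continuous_on {a..b} f"
  obtains B where "\<And>t. t \<in> {a..b} \<Longrightarrow> \<bar>f t\<bar> \<le> B"
proof -
  have "bounded (f ` {a..b})" using assms compact_continuous_image compact_imp_bounded compact_Icc by blast
  then obtain B where "\<And>y. y \<in> f ` {a..b} \<Longrightarrow> norm y \<le> B" unfolding bounded_iff by blast
  then show ?thesis using that by fastforce
qed

lemma ac_deriv:
  fixes g g' :: "real \<Rightarrow> real"
  assumes d: "\<And>t. t \<in> {a..b} \<Longrightarrow> (g has_real_derivative g' t) (at t within {a..b})"
    and c: "continuous_on {a..b} g'"
  shows "abs_cont_on a b g"
proof -
  obtain B where B: "\<And>t. t \<in> {a..b} \<Longrightarrow> \<bar>g' t\<bar> \<le> B" using cont_bounded[OF c] by blast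
  show ?thesis
  proof (rule ac_lipschitz)
    fix x y assume "x \<in> {a..b}" "y \<in> {a..b}"
    then show "\<bar>g y - g x\<bar> \<le> B * \<bar>y - x\<bar>"
      using field_differentiable_bound[of "{a..b}" g g' B y x] d B by auto
  qed
qed

lemma ac_add:
  fixes f g :: "real \<Rightarrow> real"
  assumes "abs_cont_on a b f" "abs_cont_on a b g"
  shows "abs_cont_on a b (\<lambda>t. f t + g t)"
  unfolding abs_cont_on_def
proof (intro allI impI)
  fix e :: real assume e: "e > 0"
  then have e2: "e / 2 > 0" by simp
  obtain d1 where d1: "d1 > 0" and H1: "\<forall>(n::nat) (x::nat \<Rightarrow> real) (y::nat \<Rightarrow> real).
        (\<forall>i<n. a \<le> x i \<and> x i \<le> y i \<and> y i \<le> b) \<and>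
        (\<forall>i<n. \<forall>j<n. i \<noteq> j \<longrightarrow> y i \<le> x j \<or> y j \<le> x i) \<and>
        (\<Sum>i<n. y i - x i) < d1
        \<longrightarrow> (\<Sum>i<n. \<bar>f (y i) - f (x i)\<bar>) < e/2"
    using assms(1) e2 unfolding abs_cont_on_def by blast
  obtain d2 where d2: "d2 > 0" and H2: "\<forall>(n::nat) (x::nat \<Rightarrow> real) (y::nat \<Rightarrow> real).
        (\<forall>i<n. a \<le> x i \<and> x i \<le> y i \<and> y i \<le> b) \<and>
        (\<forall>i<n. \<forall>j<n. i \<noteq> j \<longrightarrow> y i \<le> x j \<or> y j \<le> x i) \<and>
        (\<Sum>i<n. y i - x i) < d2
        \<longrightarrow> (\<Sum>i<n. \<bar>g (y i) - g (x i)\<bar>) < e/2"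
    using assms(2) e2 unfolding abs_cont_on_def by blast
  show "\<exists>\<delta>>0. \<forall>(n::nat) (x::nat \<Rightarrow> real) (y::nat \<Rightarrow> real).
        (\<forall>i<n. a \<le> x i \<and> x i \<le> y i \<and> y i \<le> b) \<and>
        (\<forall>i<n. \<forall>j<n. i \<noteq> j \<longrightarrow> y i \<le> x j \<or> y j \<le> x i) \<and>
        (\<Sum>i<n. y i - x i) < \<delta>
        \<longrightarrow> (\<Sum>i<n. \<bar>(f (y i) + g (y i)) - (f (x i) + g (x i))\<bar>) < e"
  proof (intro exI[of _ "min d1 d2"] conjI allI impI)
    show "min d1 d2 > 0" using d1 d2 by simp
    fix n :: nat and x y :: "nat \<Rightarrow> real"
    assume H: "(\<forall>i<n. a \<le> x i \<and> x i \<le> y i \<and> y i \<le> b) \<and>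
        (\<forall>i<n. \<forall>j<n. i \<noteq> j \<longrightarrow> y i \<le> x j \<or> y j \<le> x i) \<and> (\<Sum>i<n. y i - x i) < min d1 d2"
    have A: "(\<Sum>i<n. \<bar>f (y i) - f (x i)\<bar>) < e/2" using H1 H by auto
    have B: "(\<Sum>i<n. \<bar>g (y i) - g (x i)\<bar>) < e/2" using H2 H by auto
    have "(\<Sum>i<n. \<bar>(f (y i) + g (y i)) - (f (x i) + g (x i))\<bar>) \<le> (\<Sum>i<n. \<bar>f (y i) - f (x i)\<bar> + \<bar>g (y i) - g (x i)\<bar>)"
      by (rule sum_mono) linarith
    also have "\<dots> = (\<Sum>i<n. \<bar>f (y i) - f (x i)\<bar>) + (\<Sum>i<n. \<bar>g (y i) - g (x i)\<bar>)" by (rule sum.distrib)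
    finally show "(\<Sum>i<n. \<bar>(f (y i) + g (y i)) - (f (x i) + g (x i))\<bar>) < e" using A B by linarith
  qed
qed

lemma ac_mult:
  fixes f g :: "real \<Rightarrow> real"
  assumes "abs_cont_on a b f" "abs_cont_on a b g"
    and Bf: "\<And>t. t \<in> {a..b} \<Longrightarrow> \<bar>f t\<bar> \<le> B" and Bg: "\<And>t. t \<in> {a..b} \<Longrightarrow> \<bar>g t\<bar> \<le> B"
  shows "abs_cont_on a b (\<lambda>t. f t * g t)"
  unfolding abs_cont_on_def
proof (intro allI impI)
  fix e :: real assume e: "e > 0"
  define B' where "B' = \<bar>B\<bar> + 1"
  have B'p: "B' > 0" unfolding B'_def by simp
  have e2: "e / (2 * B') > 0" using e B'p by simp
  obtain d1 where d1: "d1 > 0" and H1: "\<forall>(n::nat) (x::nat \<Rightarrow> real) (y::nat \<Rightarrow> real).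
        (\<forall>i<n. a \<le> x i \<and> x i \<le> y i \<and> y i \<le> b) \<and>
        (\<forall>i<n. \<forall>j<n. i \<noteq> j \<longrightarrow> y i \<le> x j \<or> y j \<le> x i) \<and>
        (\<Sum>i<n. y i - x i) < d1
        \<longrightarrow> (\<Sum>i<n. \<bar>f (y i) - f (x i)\<bar>) < e / (2 * B')"
    using assms(1) e2 unfolding abs_cont_on_def by blast
  obtain d2 where d2: "d2 > 0" and H2: "\<forall>(n::nat) (x::nat \<Rightarrow> real) (y::nat \<Rightarrow> real).
        (\<forall>i<n. a \<le> x i \<and> x i \<le> y i \<and> y i \<le> b) \<and>
        (\<forall>i<n. \<forall>j<n. i \<noteq> j \<longrightarrow> y i \<le> x j \<or> y j \<le> x i) \<and>
        (\<Sum>i<n. y i - x i) < d2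
        \<longrightarrow> (\<Sum>i<n. \<bar>g (y i) - g (x i)\<bar>) < e / (2 * B')"
    using assms(2) e2 unfolding abs_cont_on_def by blast
  show "\<exists>\<delta>>0. \<forall>(n::nat) (x::nat \<Rightarrow> real) (y::nat \<Rightarrow> real).
        (\<forall>i<n. a \<le> x i \<and> x i \<le> y i \<and> y i \<le> b) \<and>
        (\<forall>i<n. \<forall>j<n. i \<noteq> j \<longrightarrow> y i \<le> x j \<or> y j \<le> x i) \<and>
        (\<Sum>i<n. y i - x i) < \<delta>
        \<longrightarrow> (\<Sum>i<n. \<bar>f (y i) * g (y i) - f (x i) * g (x i)\<bar>) < e"
  proof (intro exI[of _ "min d1 d2"] conjI allI impI)
    show "min d1 d2 > 0" using d1 d2 by simp
    fix n :: nat and x y :: "nat \<Rightarrow> real"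
    assume H: "(\<forall>i<n. a \<le> x i \<and> x i \<le> y i \<and> y i \<le> b) \<and>
        (\<forall>i<n. \<forall>j<n. i \<noteq> j \<longrightarrow> y i \<le> x j \<or> y j \<le> x i) \<and> (\<Sum>i<n. y i - x i) < min d1 d2"
    have A: "(\<Sum>i<n. \<bar>f (y i) - f (x i)\<bar>) < e / (2 * B')" using H1 H by auto
    have B: "(\<Sum>i<n. \<bar>g (y i) - g (x i)\<bar>) < e / (2 * B')" using H2 H by auto
    have "(\<Sum>i<n. \<bar>f (y i) * g (y i) - f (x i) * g (x i)\<bar>) \<le> (\<Sum>i<n. B' * \<bar>g (y i) - g (x i)\<bar> + B' * \<bar>f (y i) - f (x i)\<bar>)"
    proof (rule sum_mono)
      fix i assume "i \<in> {..<n}"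
      then have i: "x i \<in> {a..b}" "y i \<in> {a..b}" using H by auto
      have fy: "\<bar>f (y i)\<bar> \<le> B'" and gx: "\<bar>g (x i)\<bar> \<le> B'" using Bf[OF i(2)] Bg[OF i(1)] unfolding B'_def by auto
      have "f (y i) * g (y i) - f (x i) * g (x i) = f (y i) * (g (y i) - g (x i)) + g (x i) * (f (y i) - f (x i))"
        by (simp add: algebra_simps)
      then have "\<bar>f (y i) * g (y i) - f (x i) * g (x i)\<bar> = \<bar>f (y i) * (g (y i) - g (x i)) + g (x i) * (f (y i) - f (x i))\<bar>"
        by simp
      also have "\<dots> \<le> \<bar>f (y i) * (g (y i) - g (x i))\<bar> + \<bar>g (x i) * (f (y i) - f (x i))\<bar>"
        by (rule abs_triangle_ineq)
      also have "\<dots> = \<bar>f (y i)\<bar> * \<bar>g (y i) - g (x i)\<bar> + \<bar>g (x i)\<bar> * \<bar>f (y i) - f (x i)\<bar>"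
        by (simp add: abs_mult)
      also have "\<dots> \<le> B' * \<bar>g (y i) - g (x i)\<bar> + B' * \<bar>f (y i) - f (x i)\<bar>"
        using fy gx by (intro add_mono mult_right_mono) auto
      finally show "\<bar>f (y i) * g (y i) - f (x i) * g (x i)\<bar> \<le> B' * \<bar>g (y i) - g (x i)\<bar> + B' * \<bar>f (y i) - f (x i)\<bar>" .
    qed
    also have "\<dots> = B' * (\<Sum>i<n. \<bar>g (y i) - g (x i)\<bar>) + B' * (\<Sum>i<n. \<bar>f (y i) - f (x i)\<bar>)"
      by (simp add: sum.distrib sum_distrib_left)
    also have "\<dots> < B' * (e / (2 * B')) + B' * (e / (2 * B'))"
      using A B B'p by (intro add_strict_mono mult_strict_left_mono) auto
    also have "\<dots> = e" using B'p by (simp add: field_simps)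
    finally show "(\<Sum>i<n. \<bar>f (y i) * g (y i) - f (x i) * g (x i)\<bar>) < e" .
  qed
qed

lemma ac_sub:
  assumes ac: "abs_cont_on a b g" and aa: "a \<le> a'" and bb: "b' \<le> b"
  shows "abs_cont_on a' b' g"
  unfolding abs_cont_on_def
proof (intro allI impI)
  fix e :: real assume e: "e > 0"
  obtain d where d: "d > 0" and H: "\<forall>(n::nat) (x::nat \<Rightarrow> real) (y::nat \<Rightarrow> real).
        (\<forall>i<n. a \<le> x i \<and> x i \<le> y i \<and> y i \<le> b) \<and>
        (\<forall>i<n. \<forall>j<n. i \<noteq> j \<longrightarrow> y i \<le> x j \<or> y j \<le> x i) \<and>
        (\<Sum>i<n. y i - x i) < d
        \<longrightarrow> (\<Sum>i<n. \<bar>g (y i) - g (x i)\<bar>) < e"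
    using ac e unfolding abs_cont_on_def by blast
  show "\<exists>\<delta>>0. \<forall>(n::nat) (x::nat \<Rightarrow> real) (y::nat \<Rightarrow> real).
        (\<forall>i<n. a' \<le> x i \<and> x i \<le> y i \<and> y i \<le> b') \<and>
        (\<forall>i<n. \<forall>j<n. i \<noteq> j \<longrightarrow> y i \<le> x j \<or> y j \<le> x i) \<and>
        (\<Sum>i<n. y i - x i) < \<delta>
        \<longrightarrow> (\<Sum>i<n. \<bar>g (y i) - g (x i)\<bar>) < e"
  proof (intro exI[of _ d] conjI allI impI)
    show "d > 0" by (rule d)
    fix n :: nat and x y :: "nat \<Rightarrow> real"
    assume H': "(\<forall>i<n. a' \<le> x i \<and> x i \<le> y i \<and> y i \<le> b') \<and>
        (\<forall>i<n. \<forall>j<n. i \<noteq> j \<longrightarrow> y i \<le> x j \<or> y j \<le> x i) \<and> (\<Sum>i<n. y i - x i) < d"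
    then have "(\<forall>i<n. a \<le> x i \<and> x i \<le> y i \<and> y i \<le> b)" using aa bb by force
    then show "(\<Sum>i<n. \<bar>g (y i) - g (x i)\<bar>) < e" using H H' by blast
  qed
qed

lemma ac_neg:
  assumes "abs_cont_on a b g"
  shows "abs_cont_on a b (\<lambda>t. - g t)"
  using assms unfolding abs_cont_on_def by (simp add: abs_minus_commute)

lemma deriv_cont_on:
  fixes u u' :: "real \<Rightarrow> real"
  assumes "\<And>t. t \<in> S \<Longrightarrow> (u has_real_derivative u' t) (at t within S)"
  shows "continuous_on S u"
  unfolding continuous_on_eq_continuous_within
  using assms DERIV_continuous by blast

lemma ftc_abs_bound:
  fixes u u' :: "real \<Rightarrow> real"
  assumes du: "\<And>t. t \<in> {0..T} \<Longrightarrow> (u has_real_derivative u' t) (at t within {0..T})"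
    and cu': "continuous_on {0..T} u'"
    and st: "0 \<le> s" "s \<le> t" "t \<le> T"
  shows "\<bar>u t - u s\<bar> \<le> integral {0..T} (\<lambda>x. \<bar>u' x\<bar>)"
proof -
  have sub: "{s..t} \<subseteq> {0..T}" using st by auto
  have "\<And>x. x \<in> {s..t} \<Longrightarrow> (u has_vector_derivative u' x) (at x within {s..t})"
    using du sub by (metis has_real_derivative_iff_has_vector_derivative has_vector_derivative_within_subset subsetD)
  then have "(u' has_integral (u t - u s)) {s..t}"
    using fundamental_theorem_of_calculus[OF st(2)] by blast
  then have eq: "integral {s..t} u' = u t - u s" by (rule integral_unique)
  have cs: "continuous_on {s..t} u'" using cu' sub continuous_on_subset by blast
  have i1: "u' integrable_on {s..t}" using cs integrable_continuous_real by blast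
  have i2: "(\<lambda>x. \<bar>u' x\<bar>) integrable_on {s..t}" using cs continuous_on_rabs integrable_continuous_real by blast
  have i3: "(\<lambda>x. \<bar>u' x\<bar>) integrable_on {0..T}" using cu' continuous_on_rabs integrable_continuous_real by blast
  have "norm (integral {s..t} u') \<le> integral {s..t} (\<lambda>x. \<bar>u' x\<bar>)"
    by (rule integral_norm_bound_integral[OF i1 i2]) simp
  also have "\<dots> \<le> integral {0..T} (\<lambda>x. \<bar>u' x\<bar>)"
    by (rule integral_subset_le[OF sub i2 i3]) simp
  finally show ?thesis using eq by simp
qed

lemma osc_facts:
  fixes u u' :: "real \<Rightarrow> real"
  assumes T: "T > 0" and du: "\<And>t. t \<in> {0..T} \<Longrightarrow> (u has_real_derivative u' t) (at t within {0..T})"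
    and cu': "continuous_on {0..T} u'"
  shows "\<forall>t\<in>{0..T}. (INF t\<in>{0..T}. u t) \<le> u t \<and> u t \<le> (SUP t\<in>{0..T}. u t)"
    and "(SUP t\<in>{0..T}. u t) - (INF t\<in>{0..T}. u t) \<le> integral {0..T} (\<lambda>t. \<bar>u' t\<bar>)"
proof -
  have cu: "continuous_on {0..T} u" using deriv_cont_on du by blast
  have ne: "{0..T} \<noteq> {}" using T by simp
  obtain tM where tM: "tM \<in> {0..T}" "\<And>y. y \<in> {0..T} \<Longrightarrow> u y \<le> u tM"
    using continuous_attains_sup[OF compact_Icc ne cu] by blast
  obtain tm where tm: "tm \<in> {0..T}" "\<And>y. y \<in> {0..T} \<Longrightarrow> u tm \<le> u y"
    using continuous_attains_inf[OF compact_Icc ne cu] by blast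
  have S: "(SUP t\<in>{0..T}. u t) = u tM" using tM by (intro cSup_eq_maximum) auto
  have I: "(INF t\<in>{0..T}. u t) = u tm" using tm by (intro cInf_eq_minimum) auto
  show "\<forall>t\<in>{0..T}. (INF t\<in>{0..T}. u t) \<le> u t \<and> u t \<le> (SUP t\<in>{0..T}. u t)"
    unfolding S I using tm tM by auto
  have "\<bar>u tM - u tm\<bar> \<le> integral {0..T} (\<lambda>t. \<bar>u' t\<bar>)"
  proof (cases "tm \<le> tM")
    case True
    then show ?thesis using ftc_abs_bound[OF du cu', of tm tM] tm tM by auto
  next
    case False
    then show ?thesis using ftc_abs_bound[OF du cu', of tM tm] tm tM by (auto simp: abs_minus_commute)
  qed
  then show "(SUP t\<in>{0..T}. u t) - (INF t\<in>{0..T}. u t) \<le> integral {0..T} (\<lambda>t. \<bar>u' t\<bar>)"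
    unfolding S I by linarith
qed

lemma energy:
  fixes \<phi> f \<gamma> u u' :: "real \<Rightarrow> real" and h :: "real \<Rightarrow> real \<Rightarrow> real"
  assumes T: "T > 0" and cphi: "continuous_on UNIV \<phi>"
   and gint: "\<gamma> integrable_on {0..T}" and g0: "\<forall>t\<in>{0..T}. \<gamma> t \<ge> 0"
   and fc: "continuous_on UNIV f" and hg: "AE t in lebesgue. t \<in> {0..T} \<longrightarrow> (\<forall>x. h t x \<le> \<gamma> t)"
   and lam: "0 < lam" "lam \<le> 1" and sol: "periodic_solution \<phi> f h T lam u u'"
  shows "integral {0..T} (\<lambda>t. \<phi> (u' t) * u' t) \<le> ((SUP t\<in>{0..T}. u t) - (INF t\<in>{0..T}. u t)) * integral {0..T} \<gamma>"
proof -
  have du: "\<And>t. t\<in>{0..T} \<Longrightarrow> (u has_real_derivative u' t) (at t within {0..T})"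
   and cu': "continuous_on {0..T} u'" and u0: "u 0 = u T" and u'0: "u' 0 = u' T"
   and acphi: "abs_cont_on 0 T (\<lambda>t. \<phi> (u' t))"
   and aesol: "AE t in lebesgue. t \<in> {0..T} \<longrightarrow> (\<exists>D. ((\<lambda>s. \<phi> (u' s)) has_real_derivative D) (at t) \<and> D + lam * f (u t) * u' t + lam * h t (u t) = 0)"
   using sol unfolding periodic_solution_def by auto
  define M where "M = (SUP t\<in>{0..T}. u t)"
  define m where "m = (INF t\<in>{0..T}. u t)"
  have mM: "\<And>t. t \<in> {0..T} \<Longrightarrow> m \<le> u t \<and> u t \<le> M" using osc_facts(1)[OF T du cu'] unfolding M_def m_def by blast
  have mleM: "m \<le> M" using mM[of 0] T by auto
  have cu: "continuous_on {0..T} u" using deriv_cont_on du by blast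
  define k where "k s = f s * (s - m)" for s
  define Gf where "Gf x = integral {m - 1..x} k" for x
  have ck: "continuous_on {m-1..M+1} k" unfolding k_def using fc
    by (intro continuous_intros) (auto intro: continuous_on_subset)
  have dG: "\<And>x. x \<in> {m-1..M+1} \<Longrightarrow> (Gf has_real_derivative k x) (at x within {m-1..M+1})"
    unfolding Gf_def using integral_has_real_derivative[OF ck] by blast
  have dGat: "(Gf has_real_derivative k (u t)) (at (u t))" if t: "t \<in> {0..T}" for t
  proof -
    have "u t \<in> interior {m-1..M+1}" using mM[OF t] by auto
    moreover have "u t \<in> {m-1..M+1}" using mM[OF t] by auto
    ultimately show ?thesis using dG[of "u t"] at_within_interior by metis
  qed
  have cphiu: "continuous_on {0..T} (\<lambda>s. \<phi> (u' s))"
    using continuous_on_compose2[OF cphi cu'] by auto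
  have cpu: "continuous_on {0..T} (\<lambda>s. \<phi> (u' s) * u' s)"
    using cphiu cu' by (intro continuous_intros)
  define Cf where "Cf t = integral {0..t} (\<lambda>s. \<phi> (u' s) * u' s)" for t
  have dC: "\<And>t. t \<in> {0..T} \<Longrightarrow> (Cf has_real_derivative \<phi> (u' t) * u' t) (at t within {0..T})"
    unfolding Cf_def by (rule integral_has_real_derivative[OF cpu])
  define p where "p t = \<phi> (u' t) * (u t - m) + lam * Gf (u t) - Cf t" for t
  have ac1: "abs_cont_on 0 T (\<lambda>t. u t - m)"
  proof (rule ac_deriv)
    show "((\<lambda>t. u t - m) has_real_derivative u' t - 0) (at t within {0..T})" if "t \<in> {0..T}" for t
      by (rule DERIV_diff[OF du[OF that] DERIV_const])
    show "continuous_on {0..T} (\<lambda>t. u' t - 0)" using cu' by simp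
  qed
  obtain B1 where B1: "\<And>t. t \<in> {0..T} \<Longrightarrow> \<bar>\<phi> (u' t)\<bar> \<le> B1" using cont_bounded[OF cphiu] by blast
  have cum: "continuous_on {0..T} (\<lambda>t. u t - m)" using cu by (intro continuous_intros)
  obtain B2 where B2: "\<And>t. t \<in> {0..T} \<Longrightarrow> \<bar>u t - m\<bar> \<le> B2"
    using cont_bounded[OF cum] by blast
  have ac12: "abs_cont_on 0 T (\<lambda>t. \<phi> (u' t) * (u t - m))"
  proof (rule ac_mult[OF acphi ac1, of "\<bar>B1\<bar> + \<bar>B2\<bar>"])
    show "\<And>t. t \<in> {0..T} \<Longrightarrow> \<bar>\<phi> (u' t)\<bar> \<le> \<bar>B1\<bar> + \<bar>B2\<bar>" using B1 by fastforce
    show "\<And>t. t \<in> {0..T} \<Longrightarrow> \<bar>u t - m\<bar> \<le> \<bar>B1\<bar> + \<bar>B2\<bar>" using B2 by fastforce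
  qed
  have "u ` {0..T} \<subseteq> {m - 1..M + 1}" using mM by fastforce
  then have ck2: "continuous_on {0..T} (\<lambda>t. k (u t))"
    using continuous_on_compose2[OF ck cu] by blast
  have ac2: "abs_cont_on 0 T (\<lambda>t. lam * Gf (u t))"
  proof (rule ac_deriv)
    show "((\<lambda>t. lam * Gf (u t)) has_real_derivative lam * (k (u t) * u' t)) (at t within {0..T})" if "t \<in> {0..T}" for t
      by (rule DERIV_cmult[OF DERIV_chain2[OF dGat[OF that] du[OF that]]])
    show "continuous_on {0..T} (\<lambda>t. lam * (k (u t) * u' t))" using ck2 cu' by (intro continuous_intros)
  qed
  have ac3: "abs_cont_on 0 T Cf" by (rule ac_deriv[OF dC cpu])
  have peq: "p = (\<lambda>t. (\<phi> (u' t) * (u t - m) + lam * Gf (u t)) + - Cf t)"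
    unfolding p_def by (auto simp: fun_eq_iff)
  have acp: "abs_cont_on 0 T p"
    unfolding peq by (intro ac_add ac12 ac2 ac_neg ac3)
  have nul: "{0, T} \<in> null_sets lebesgue" by (simp add: negligible_iff_null_sets[symmetric])
  have aep: "AE t in lebesgue. t \<in> {0..T} \<longrightarrow> (\<exists>D. (p has_real_derivative D) (at t) \<and> - ((M - m) * \<gamma> t) \<le> D)"
    using aesol hg AE_not_in[OF nul]
  proof eventually_elim
    case (elim t)
    show ?case
    proof
      assume t: "t \<in> {0..T}"
      then have t': "t \<in> {0<..<T}" using elim(3) by auto
      then have it: "t \<in> interior {0..T}" by simp
      obtain D where dphi: "((\<lambda>s. \<phi> (u' s)) has_real_derivative D) (at t)"
        and Deq: "D + lam * f (u t) * u' t + lam * h t (u t) = 0" using elim(1) t by blast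
      have hle: "h t (u t) \<le> \<gamma> t" using elim(2) t by blast
      have duat: "(u has_real_derivative u' t) (at t)" using du[OF t] at_within_interior[OF it] by simp
      have dCat: "(Cf has_real_derivative \<phi> (u' t) * u' t) (at t)" using dC[OF t] at_within_interior[OF it] by simp
      have dp: "(p has_real_derivative (D * (u t - m) + (u' t - 0) * \<phi> (u' t) + lam * (k (u t) * u' t)) - \<phi> (u' t) * u' t) (at t)"
        unfolding p_def
        by (rule DERIV_diff[OF DERIV_add[OF DERIV_mult[OF dphi DERIV_diff[OF duat DERIV_const]] DERIV_cmult[OF DERIV_chain2[OF dGat[OF t] duat]]] dCat])
      have Xeq: "(D * (u t - m) + (u' t - 0) * \<phi> (u' t) + lam * (k (u t) * u' t)) - \<phi> (u' t) * u' t = - ((u t - m) * (lam * h t (u t)))"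
      proof -
        have Dv: "D = - (lam * f (u t) * u' t) - lam * h t (u t)" using Deq by linarith
        show ?thesis unfolding k_def Dv by (simp add: algebra_simps)
      qed
      have g0t: "\<gamma> t \<ge> 0" using g0 t by blast
      have "lam * h t (u t) \<le> lam * \<gamma> t" using hle lam by (simp add: mult_left_mono)
      also have "\<dots> \<le> \<gamma> t" using lam g0t by (simp add: mult_left_le_one_le)
      finally have lh: "lam * h t (u t) \<le> \<gamma> t" .
      have "(u t - m) * (lam * h t (u t)) \<le> (u t - m) * \<gamma> t" using lh mM[OF t] by (simp add: mult_left_mono)
      also have "\<dots> \<le> (M - m) * \<gamma> t" using mM[OF t] g0t by (simp add: mult_right_mono)
      finally have "- ((M - m) * \<gamma> t) \<le> - ((u t - m) * (lam * h t (u t)))" by linarith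
      then show "\<exists>D. (p has_real_derivative D) (at t) \<and> - ((M - m) * \<gamma> t) \<le> D"
        using dp Xeq by metis
    qed
  qed
  have gint': "(\<lambda>t. (M - m) * \<gamma> t) integrable_on {0..T}" using gint by (rule integrable_on_mult_right)
  have key: "p 0 - p T \<le> integral {0..T} (\<lambda>t. (M - m) * \<gamma> t)"
    by (rule KEY[OF _ acp gint' _ aep]) (use T g0 mleM in auto)
  have "p 0 - p T = Cf T - Cf 0" unfolding p_def using u0 u'0 by simp
  moreover have "Cf 0 = 0" unfolding Cf_def by simp
  ultimately have "integral {0..T} (\<lambda>t. \<phi> (u' t) * u' t) \<le> (M - m) * integral {0..T} \<gamma>"
    using key unfolding Cf_def by simp
  then show ?thesis unfolding M_def m_def .
qed

lemma KEY_abs: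
  fixes g \<gamma> :: "real \<Rightarrow> real"
  assumes ab: "a \<le> b" and ac: "abs_cont_on a b g"
    and gi: "\<gamma> integrable_on {a..b}" and g0: "\<And>t. t \<in> {a..b} \<Longrightarrow> 0 \<le> \<gamma> t"
    and der: "AE t in lebesgue. t \<in> {a..b} \<longrightarrow> (\<exists>D. (g has_real_derivative D) (at t) \<and> \<bar>D\<bar> \<le> \<gamma> t)"
  shows "\<bar>g b - g a\<bar> \<le> integral {a..b} \<gamma>"
proof -
  have d1: "AE t in lebesgue. t \<in> {a..b} \<longrightarrow> (\<exists>D. (g has_real_derivative D) (at t) \<and> - \<gamma> t \<le> D)"
    using der by eventually_elim (auto simp: abs_le_iff)
  have d2: "AE t in lebesgue. t \<in> {a..b} \<longrightarrow> (\<exists>D. ((\<lambda>t. - g t) has_real_derivative D) (at t) \<and> - \<gamma> t \<le> D)"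
    using der
  proof eventually_elim
    case (elim t)
    show ?case
    proof
      assume "t \<in> {a..b}"
      then obtain D where "(g has_real_derivative D) (at t)" "\<bar>D\<bar> \<le> \<gamma> t" using elim by blast
      then show "\<exists>D. ((\<lambda>t. - g t) has_real_derivative D) (at t) \<and> - \<gamma> t \<le> D"
        by (intro exI[of _ "- D"]) (auto intro: DERIV_minus simp: abs_le_iff)
    qed
  qed
  have "g a - g b \<le> integral {a..b} \<gamma>" by (rule KEY[OF ab ac gi g0 d1])
  moreover have "- g a - - g b \<le> integral {a..b} \<gamma>" by (rule KEY[OF ab ac_neg[OF ac] gi g0 d2])
  ultimately show ?thesis by linarith
qed

lemma slope_bound:
  fixes \<phi> f u u' mh :: "real \<Rightarrow> real" and h :: "real \<Rightarrow> real \<Rightarrow> real"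
  assumes T: "T > 0" and phi0: "\<phi> 0 = 0"
   and lam: "0 < lam" "lam \<le> 1" and sol: "periodic_solution \<phi> f h T lam u u'"
   and mhi: "mh integrable_on {0..T}" and mhb: "\<And>t. t \<in> {0..T} \<Longrightarrow> \<bar>h t (u t)\<bar> \<le> mh t"
   and Fb: "\<And>t. t \<in> {0..T} \<Longrightarrow> \<bar>f (u t)\<bar> \<le> F"
  shows "\<forall>t\<in>{0..T}. \<bar>\<phi> (u' t)\<bar> \<le> F * integral {0..T} (\<lambda>t. \<bar>u' t\<bar>) + integral {0..T} mh"
proof -
  have du: "\<And>t. t\<in>{0..T} \<Longrightarrow> (u has_real_derivative u' t) (at t within {0..T})"
   and cu': "continuous_on {0..T} u'" and u0: "u 0 = u T"
   and acphi: "abs_cont_on 0 T (\<lambda>t. \<phi> (u' t))"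
   and aesol: "AE t in lebesgue. t \<in> {0..T} \<longrightarrow> (\<exists>D. ((\<lambda>s. \<phi> (u' s)) has_real_derivative D) (at t) \<and> D + lam * f (u t) * u' t + lam * h t (u t) = 0)"
   using sol unfolding periodic_solution_def by auto
  have cu: "continuous_on {0..T} u" using deriv_cont_on du by blast
  have duat: "(u has_real_derivative u' t) (at t)" if "0 < t" "t < T" for t
  proof -
    have it: "t \<in> interior {0..T}" using that by simp
    then show ?thesis using du[of t] at_within_interior[OF it] that by simp
  qed
  obtain t0 where t0: "0 < t0" "t0 < T" "DERIV u t0 :> 0"
    using Rolle[OF T u0 cu] duat real_differentiable_def by blast
  have u't0: "u' t0 = 0" using DERIV_unique[OF duat[OF t0(1,2)] t0(3)] .
  define G where "G s = F * \<bar>u' s\<bar> + mh s" for s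
  have F0: "F \<ge> 0" using Fb[of 0] T by auto
  have mh0: "\<And>t. t \<in> {0..T} \<Longrightarrow> mh t \<ge> 0" using mhb by (meson abs_ge_zero order_trans)
  have i1: "(\<lambda>s. F * \<bar>u' s\<bar>) integrable_on {0..T}"
    using cu' by (intro integrable_on_mult_right integrable_continuous_real continuous_intros)
  have Gi: "G integrable_on {0..T}" unfolding G_def
    using integrable_add[OF i1 mhi] .
  have G0: "\<And>t. t \<in> {0..T} \<Longrightarrow> 0 \<le> G t" unfolding G_def using mh0 F0 by simp
  have aeG: "AE t in lebesgue. t \<in> {0..T} \<longrightarrow> (\<exists>D. ((\<lambda>s. \<phi> (u' s)) has_real_derivative D) (at t) \<and> \<bar>D\<bar> \<le> G t)"
    using aesol
  proof eventually_elim
    case (elim t)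
    show ?case
    proof
      assume t: "t \<in> {0..T}"
      then obtain D where dD: "((\<lambda>s. \<phi> (u' s)) has_real_derivative D) (at t)"
        and Deq: "D + lam * f (u t) * u' t + lam * h t (u t) = 0" using elim by blast
      have "\<bar>lam * f (u t) * u' t\<bar> \<le> F * \<bar>u' t\<bar>"
      proof -
        have "\<bar>lam * f (u t) * u' t\<bar> = lam * (\<bar>f (u t)\<bar> * \<bar>u' t\<bar>)" using lam by (simp add: abs_mult)
        also have "\<dots> \<le> \<bar>f (u t)\<bar> * \<bar>u' t\<bar>" using lam by (simp add: mult_left_le_one_le)
        also have "\<dots> \<le> F * \<bar>u' t\<bar>" using Fb[OF t] by (simp add: mult_right_mono)
        finally show ?thesis .
      qed
      moreover have "\<bar>lam * h t (u t)\<bar> \<le> mh t"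
      proof -
        have "\<bar>lam * h t (u t)\<bar> = lam * \<bar>h t (u t)\<bar>" using lam by (simp add: abs_mult)
        also have "\<dots> \<le> \<bar>h t (u t)\<bar>" using lam by (simp add: mult_left_le_one_le)
        finally show ?thesis using mhb[OF t] by linarith
      qed
      ultimately have "\<bar>D\<bar> \<le> G t" using Deq unfolding G_def by linarith
      then show "\<exists>D. ((\<lambda>s. \<phi> (u' s)) has_real_derivative D) (at t) \<and> \<bar>D\<bar> \<le> G t" using dD by blast
    qed
  qed
  have IG: "integral {0..T} G = F * integral {0..T} (\<lambda>t. \<bar>u' t\<bar>) + integral {0..T} mh"
  proof -
    show ?thesis unfolding G_def using integral_add[OF i1 mhi] by simp
  qed
  have gen: "\<bar>\<phi> (u' b) - \<phi> (u' a)\<bar> \<le> integral {0..T} G" if ab: "0 \<le> a" "a \<le> b" "b \<le> T" for a b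
  proof -
    have sub: "{a..b} \<subseteq> {0..T}" using ab by auto
    have Gi': "G integrable_on {a..b}" using integrable_on_subinterval[OF Gi sub] .
    have "\<bar>\<phi> (u' b) - \<phi> (u' a)\<bar> \<le> integral {a..b} G"
    proof (rule KEY_abs[OF ab(2) ac_sub[OF acphi ab(1) ab(3)] Gi'])
      show "\<And>t. t \<in> {a..b} \<Longrightarrow> 0 \<le> G t" using G0 sub by blast
      show "AE t in lebesgue. t \<in> {a..b} \<longrightarrow> (\<exists>D. ((\<lambda>s. \<phi> (u' s)) has_real_derivative D) (at t) \<and> \<bar>D\<bar> \<le> G t)"
        using aeG by eventually_elim (use sub in blast)
    qed
    also have "\<dots> \<le> integral {0..T} G"
      by (rule integral_subset_le[OF sub Gi' Gi]) (use G0 in blast)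
    finally show ?thesis .
  qed
  show ?thesis
  proof
    fix t assume t: "t \<in> {0..T}"
    have "\<bar>\<phi> (u' t) - \<phi> (u' t0)\<bar> \<le> integral {0..T} G"
    proof (cases "t \<le> t0")
      case True
      then show ?thesis using gen[of t t0] t t0 by (auto simp: abs_minus_commute)
    next
      case False
      then show ?thesis using gen[of t0 t] t t0 by auto
    qed
    then show "\<bar>\<phi> (u' t)\<bar> \<le> F * integral {0..T} (\<lambda>t. \<bar>u' t\<bar>) + integral {0..T} mh"
      using u't0 phi0 IG by simp
  qed
qed

theorem lemma2p5:
  fixes \<phi> :: "real \<Rightarrow> real" and \<gamma> :: "real \<Rightarrow> real" and T :: real
  assumes "T > 0"
    and "strict_mono \<phi>" and "\<exists>\<psi>. homeomorphism UNIV UNIV \<phi> \<psi>" and "\<phi> 0 = 0"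
    and "\<gamma> absolutely_integrable_on {0..T}" and "\<forall>t\<in>{0..T}. \<gamma> t \<ge> 0"
  shows
    "(\<exists>K0. \<forall>f h lam u u'.
        continuous_on UNIV f \<and> caratheodory T h \<and>
        (AE t in lebesgue. t \<in> {0..T} \<longrightarrow> (\<forall>x. h t x \<le> \<gamma> t)) \<and>
        0 < lam \<and> lam \<le> 1 \<and> periodic_solution \<phi> f h T lam u u'
        \<longrightarrow> (SUP t\<in>{0..T}. u t) - (INF t\<in>{0..T}. u t) \<le> K0 \<and>
            integral {0..T} (\<lambda>t. \<bar>u' t\<bar>) \<le> K0)
     \<and>
     (\<forall>f h. continuous_on UNIV f \<and> caratheodory T h \<and>
        (AE t in lebesgue. t \<in> {0..T} \<longrightarrow> (\<forall>x. h t x \<le> \<gamma> t)) \<longrightarrow>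
        (\<forall>l1 l2. l1 < l2 \<longrightarrow>
          (\<exists>K1>0. \<forall>lam u u'.
             0 < lam \<and> lam \<le> 1 \<and> periodic_solution \<phi> f h T lam u u' \<and>
             (\<forall>t\<in>{0..T}. l1 \<le> u t \<and> u t \<le> l2)
             \<longrightarrow> (\<forall>t\<in>{0..T}. \<bar>u' t\<bar> \<le> K1))))"
proof -
  note T = assms(1) and mono = assms(2) and phi0 = assms(4) and g0 = assms(6)
  obtain \<psi> where hom: "homeomorphism UNIV UNIV \<phi> \<psi>" using assms(3) by blast
  then have phipsi: "\<And>y. \<phi> (\<psi> y) = y" and cphi: "continuous_on UNIV \<phi>"
    unfolding homeomorphism_def by auto
  have gint: "\<gamma> integrable_on {0..T}" using assms(5) unfolding absolutely_integrable_on_def by blast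
  have mle: "\<And>x y. \<phi> x \<le> \<phi> y \<longleftrightarrow> x \<le> y" using mono by (simp add: strict_mono_less_eq)
  define G0 where "G0 = integral {0..T} \<gamma>"
  have G0nn: "G0 \<ge> 0" unfolding G0_def using integral_nonneg[OF gint] g0 by blast
  define G1 where "G1 = G0 + 1"
  have G1p: "G1 > 0" unfolding G1_def using G0nn by simp
  define S where "S = max 0 (max (\<psi> (2 * G1)) (- \<psi> (- (2 * G1))))"
  have S0: "S \<ge> 0" unfolding S_def by simp
  define K0 where "K0 = 2 * T * S"
  have GS0: "0 \<le> 2 * G1 * S" using G1p S0 by simp
  have pw: "2 * G1 * \<bar>s\<bar> - 2 * G1 * S \<le> \<phi> s * s" for s
  proof (cases "s \<ge> S")
    case True
    then have "\<psi> (2 * G1) \<le> s" "s \<ge> 0" unfolding S_def by auto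
    then have "2 * G1 \<le> \<phi> s" using mle[of "\<psi> (2 * G1)" s] phipsi by simp
    then have "2 * G1 * s \<le> \<phi> s * s" using \<open>s \<ge> 0\<close> by (simp add: mult_right_mono)
    then show ?thesis using \<open>s \<ge> 0\<close> GS0 by simp
  next
    case False
    show ?thesis
    proof (cases "s \<le> - S")
      case True
      then have "s \<le> \<psi> (- (2 * G1))" "s \<le> 0" unfolding S_def by auto
      then have "\<phi> s \<le> - (2 * G1)" using mle[of s "\<psi> (- (2 * G1))"] phipsi by simp
      then have "(- (2 * G1)) * s \<le> \<phi> s * s" by (rule mult_right_mono_neg[OF _ \<open>s \<le> 0\<close>])
      then show ?thesis using \<open>s \<le> 0\<close> GS0 by simp
    next
      case False2: False
      then have sS: "\<bar>s\<bar> \<le> S" using False by auto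
      have "0 \<le> \<phi> s * s"
      proof (cases "s \<ge> 0")
        case True
        then have "\<phi> s \<ge> 0" using mle[of 0 s] phi0 by simp
        then show ?thesis using True by simp
      next
        case False
        then have "\<phi> s \<le> 0" using mle[of s 0] phi0 by simp
        then show ?thesis using False by (simp add: mult_nonpos_nonpos)
      qed
      moreover have "2 * G1 * \<bar>s\<bar> \<le> 2 * G1 * S" using sS G1p by simp
      ultimately show ?thesis by linarith
    qed
  qed
  have A: "(SUP t\<in>{0..T}. u t) - (INF t\<in>{0..T}. u t) \<le> K0 \<and> integral {0..T} (\<lambda>t. \<bar>u' t\<bar>) \<le> K0"
    if fc: "continuous_on UNIV f" and hg: "AE t in lebesgue. t \<in> {0..T} \<longrightarrow> (\<forall>x. h t x \<le> \<gamma> t)"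
      and lam: "0 < lam" "lam \<le> 1" and sol: "periodic_solution \<phi> f h T lam u u'"
    for f h lam u u'
  proof -
    have du: "\<And>t. t\<in>{0..T} \<Longrightarrow> (u has_real_derivative u' t) (at t within {0..T})"
      and cu': "continuous_on {0..T} u'" using sol unfolding periodic_solution_def by auto
    define L where "L = integral {0..T} (\<lambda>t. \<bar>u' t\<bar>)"
    define osc where "osc = (SUP t\<in>{0..T}. u t) - (INF t\<in>{0..T}. u t)"
    have oscL: "osc \<le> L" unfolding osc_def L_def by (rule osc_facts(2)[OF T du cu'])
    have en: "integral {0..T} (\<lambda>t. \<phi> (u' t) * u' t) \<le> osc * G0"
      unfolding osc_def G0_def by (rule energy[OF T cphi gint g0 fc hg lam sol])
    have cphiu: "continuous_on {0..T} (\<lambda>s. \<phi> (u' s))"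
      using continuous_on_compose2[OF cphi cu'] by auto
    have i1: "(\<lambda>t. \<phi> (u' t) * u' t) integrable_on {0..T}"
      using cphiu cu' by (intro integrable_continuous_real continuous_intros)
    have i2: "(\<lambda>t. 2 * G1 * \<bar>u' t\<bar> - 2 * G1 * S) integrable_on {0..T}"
      using cu' by (intro integrable_continuous_real continuous_intros)
    have i3: "(\<lambda>t. \<bar>u' t\<bar>) integrable_on {0..T}"
      using cu' by (intro integrable_continuous_real continuous_intros)
    have "integral {0..T} (\<lambda>t. 2 * G1 * \<bar>u' t\<bar> - 2 * G1 * S) \<le> integral {0..T} (\<lambda>t. \<phi> (u' t) * u' t)"
      by (rule integral_le[OF i2 i1]) (rule pw)
    moreover have "integral {0..T} (\<lambda>t. 2 * G1 * \<bar>u' t\<bar> - 2 * G1 * S) = 2 * G1 * L - 2 * G1 * S * T"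
    proof -
      have "integral {0..T} (\<lambda>t. 2 * G1 * \<bar>u' t\<bar> - 2 * G1 * S) = integral {0..T} (\<lambda>t. 2 * G1 * \<bar>u' t\<bar>) - integral {0..T} (\<lambda>t. 2 * G1 * S)"
        by (rule integral_diff) (use i3 in \<open>auto intro: integrable_on_mult_right\<close>)
      then show ?thesis unfolding L_def using T by simp
    qed
    ultimately have e1: "2 * G1 * L - 2 * G1 * S * T \<le> osc * G0" using en by linarith
    have L0: "L \<ge> 0" unfolding L_def using integral_nonneg[OF i3] by simp
    have "osc * G0 \<le> L * G0" using oscL G0nn by (simp add: mult_right_mono)
    also have "\<dots> \<le> L * G1" using L0 unfolding G1_def by (simp add: mult_left_mono)
    finally have "2 * G1 * L - 2 * G1 * S * T \<le> L * G1" using e1 by linarith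
    then have "G1 * L \<le> G1 * (2 * S * T)" by (simp add: algebra_simps)
    then have LK: "L \<le> K0" unfolding K0_def using G1p by (simp add: mult_le_cancel_left_pos algebra_simps)
    show ?thesis using LK oscL unfolding L_def osc_def by linarith
  qed
  have P1: "\<exists>K0. \<forall>f h lam u u'.
        continuous_on UNIV f \<and> caratheodory T h \<and>
        (AE t in lebesgue. t \<in> {0..T} \<longrightarrow> (\<forall>x. h t x \<le> \<gamma> t)) \<and>
        0 < lam \<and> lam \<le> 1 \<and> periodic_solution \<phi> f h T lam u u'
        \<longrightarrow> (SUP t\<in>{0..T}. u t) - (INF t\<in>{0..T}. u t) \<le> K0 \<and>
            integral {0..T} (\<lambda>t. \<bar>u' t\<bar>) \<le> K0"
    using A by blast
  have P2: "\<forall>f h. continuous_on UNIV f \<and> caratheodory T h \<and>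
        (AE t in lebesgue. t \<in> {0..T} \<longrightarrow> (\<forall>x. h t x \<le> \<gamma> t)) \<longrightarrow>
        (\<forall>l1 l2. l1 < l2 \<longrightarrow>
          (\<exists>K1>0. \<forall>lam u u'.
             0 < lam \<and> lam \<le> 1 \<and> periodic_solution \<phi> f h T lam u u' \<and>
             (\<forall>t\<in>{0..T}. l1 \<le> u t \<and> u t \<le> l2)
             \<longrightarrow> (\<forall>t\<in>{0..T}. \<bar>u' t\<bar> \<le> K1)))"
  proof (intro allI impI, elim conjE)
    fix f :: "real \<Rightarrow> real" and h :: "real \<Rightarrow> real \<Rightarrow> real" and l1 l2 :: real
    assume fc: "continuous_on UNIV f" and car: "caratheodory T h"
      and hg: "AE t in lebesgue. t \<in> {0..T} \<longrightarrow> (\<forall>x. h t x \<le> \<gamma> t)" and l12: "l1 < l2"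
    define r where "r = \<bar>l1\<bar> + \<bar>l2\<bar> + 1"
    have "r > 0" unfolding r_def by simp
    then obtain mh where mhi: "mh integrable_on {0..T}" and mhb: "\<forall>t\<in>{0..T}. \<forall>x. \<bar>x\<bar> \<le> r \<longrightarrow> \<bar>h t x\<bar> \<le> mh t"
      using car unfolding caratheodory_def by blast
    have "continuous_on {l1..l2} f" using fc continuous_on_subset by blast
    then obtain F where Fb: "\<And>x. x \<in> {l1..l2} \<Longrightarrow> \<bar>f x\<bar> \<le> F" using cont_bounded by blast
    have F0: "F \<ge> 0" using Fb[of l1] l12 by auto
    define R where "R = F * K0 + integral {0..T} mh"
    define K1 where "K1 = max \<bar>\<psi> R\<bar> \<bar>\<psi> (- R)\<bar> + 1"
    have K1p: "K1 > 0" unfolding K1_def by simp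
    show "\<exists>K1>0. \<forall>lam u u'.
             0 < lam \<and> lam \<le> 1 \<and> periodic_solution \<phi> f h T lam u u' \<and>
             (\<forall>t\<in>{0..T}. l1 \<le> u t \<and> u t \<le> l2)
             \<longrightarrow> (\<forall>t\<in>{0..T}. \<bar>u' t\<bar> \<le> K1)"
    proof (intro exI[of _ K1] conjI allI impI ballI, rule K1p, elim conjE)
      fix lam u u' t
      assume lam1: "0 < lam" and lam2: "lam \<le> 1" and sol: "periodic_solution \<phi> f h T lam u u'"
        and ul: "\<forall>t\<in>{0..T}. l1 \<le> u t \<and> u t \<le> l2" and t: "t \<in> {0..T}"
      have Fb': "\<And>t. t \<in> {0..T} \<Longrightarrow> \<bar>f (u t)\<bar> \<le> F" using Fb ul by auto
      have mhb': "\<And>t. t \<in> {0..T} \<Longrightarrow> \<bar>h t (u t)\<bar> \<le> mh t"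
      proof -
        fix t assume t: "t \<in> {0..T}"
        have "l1 \<le> u t" "u t \<le> l2" using ul t by auto
        then have "\<bar>u t\<bar> \<le> r" unfolding r_def by linarith
        then show "\<bar>h t (u t)\<bar> \<le> mh t" using mhb t by blast
      qed
      have sb: "\<bar>\<phi> (u' t)\<bar> \<le> F * integral {0..T} (\<lambda>t. \<bar>u' t\<bar>) + integral {0..T} mh"
        using slope_bound[OF T phi0 lam1 lam2 sol mhi mhb' Fb'] t by blast
      have "integral {0..T} (\<lambda>t. \<bar>u' t\<bar>) \<le> K0" using A[OF fc hg lam1 lam2 sol] by blast
      then have "F * integral {0..T} (\<lambda>t. \<bar>u' t\<bar>) \<le> F * K0" using F0 by (simp add: mult_left_mono)
      then have pR: "\<bar>\<phi> (u' t)\<bar> \<le> R" using sb unfolding R_def by linarith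
      then have "\<phi> (u' t) \<le> \<phi> (\<psi> R)" "\<phi> (\<psi> (- R)) \<le> \<phi> (u' t)" using phipsi by auto
      then have "u' t \<le> \<psi> R" "\<psi> (- R) \<le> u' t" using mle by auto
      then show "\<bar>u' t\<bar> \<le> K1" unfolding K1_def by linarith
    qed
  qed
  show ?thesis using P1 P2 by blast
qed

end
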